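(* Let $n$ be an odd integer. If an edge-coloring of a complete graph contains no rainbow $n$-cycle, then it contains no rainbow $m$-cycle for every integer $m \ge n^3/2$.
   Context: A coloring is an arbitrary (not necessarily proper) assignment of colors, from an arbitrary set, to the edges of an undirected complete graph; the graph may be finite or infinite. A rainbow $n$-cycle is a cycle through $n$ distinct vertices whose $n$ edges all receive pairwise distinct colors. *)

theory Defs
  imports Main
begin

text \<open>An edge-coloring of the complete graph on vertex type 'v is any function c from
  edges (two-element vertex sets) to colours; only its values on sets {u,v} with u \<noteq> v matter.\<close>

definition rainbow_cycle :: "('v set \<Rightarrow> 'c) \<Rightarrow> nat \<Rightarrow> 'v list \<Rightarrow> bool" where
  "rainbow_cycle c n vs \<longleftrightarrow>
     n \<ge> 3 \<and> length vs = n \<and> distinct vs \<and>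
     inj_on (\<lambda>i. c {vs ! i, vs ! ((i + 1) mod n)}) {..<n}"

definition has_rainbow_cycle :: "('v set \<Rightarrow> 'c) \<Rightarrow> nat \<Rightarrow> bool" where
  "has_rainbow_cycle c n \<longleftrightarrow> (\<exists>vs. rainbow_cycle c n vs)"

end

theory Submission
  imports Defs
begin



definition VV :: "'v list \<Rightarrow> nat \<Rightarrow> nat \<Rightarrow> 'v" where
  "VV vs L t = vs ! (t mod L)"

definition cc :: "('v set \<Rightarrow> 'c) \<Rightarrow> 'v list \<Rightarrow> nat \<Rightarrow> nat \<Rightarrow> 'c" where
  "cc c vs L t = c {VV vs L t, VV vs L (Suc t)}"

lemma mod_window:
  fixes x y b L :: nat
  assumes "x \<in> {b..<b+L}" "y \<in> {b..<b+L}" "x mod L = y mod L"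
  shows "x = y"
proof -
  { fix x y :: nat assume xy: "x \<le> y" "x \<in> {b..<b+L}" "y \<in> {b..<b+L}" "x mod L = y mod L"
    then have "L dvd y - x" using mod_eq_dvd_iff_nat by metis
    moreover have "y - x < L" using xy by auto
    ultimately have "y - x = 0" using dvd_imp_le by (metis bot_nat_0.not_eq_extremum linorder_not_le)
    then have "x = y" using xy by auto }
  then show ?thesis using assms by (metis nat_le_linear)
qed

context
  fixes c :: "'v set \<Rightarrow> 'c" and vs :: "'v list" and L :: nat
  assumes rc: "rainbow_cycle c L vs"
begin

lemma L3: "L \<ge> 3" and len: "length vs = L" and dist: "distinct vs"
  and inj0: "inj_on (\<lambda>i. c {vs!i, vs!((i+1) mod L)}) {..<L}"
  using rc unfolding rainbow_cycle_def by auto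

lemma V_per: "VV vs L (t + L) = VV vs L t"
  by (simp add: VV_def)

lemma V_mod: "x mod L = y mod L \<Longrightarrow> VV vs L x = VV vs L y"
  by (simp add: VV_def)

lemma V_eq: "VV vs L x = VV vs L y \<Longrightarrow> x mod L = y mod L"
  using dist len L3 unfolding VV_def
  by (metis nth_eq_iff_index_eq  mod_less_divisor not_numeral_le_zero zero_less_iff_neq_zero)

lemma V_inj: "inj_on (VV vs L) {b..<b+L}"
  unfolding inj_on_def using V_eq mod_window by blast

lemma col_alt: "cc c vs L t = c {vs ! (t mod L), vs ! ((t mod L + 1) mod L)}"
  unfolding cc_def VV_def by (simp add: mod_Suc_eq)

lemma col_eq: "cc c vs L x = cc c vs L y \<Longrightarrow> x mod L = y mod L"
  using inj0 L3 unfolding col_alt inj_on_def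
  by (metis lessThan_iff mod_less_divisor not_numeral_le_zero zero_less_iff_neq_zero)

lemma col_inj: "inj_on (cc c vs L) {b..<b+L}"
  unfolding inj_on_def using col_eq mod_window by blast

lemma col_per: "cc c vs L (t + L) = cc c vs L t"
  unfolding cc_def using V_per by (metis add_Suc)

lemma col_img_shift: "cc c vs L ` {x+L..<y+L} = cc c vs L ` {x..<y}"
proof -
  have "{x+L..<y+L} = (\<lambda>t. t + L) ` {x..<y}" by (simp add: image_add_atLeastLessThan')
  then show ?thesis by (simp only: image_image col_per)
qed

lemma subcycle:
  assumes M3: "3 \<le> M" and ti: "inj_on \<tau> {..<M}" and tw: "\<tau> ` {..<M} \<subseteq> {b..<b+L}"
    and hi: "inj_on (\<lambda>i. c {VV vs L (\<tau> i), VV vs L (\<tau> ((i+1) mod M))}) {..<M}"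
  shows "has_rainbow_cycle c M"
proof -
  define ws where "ws = map (\<lambda>i. VV vs L (\<tau> i)) [0..<M]"
  have "inj_on (VV vs L) (\<tau> ` {..<M})" using V_inj tw by (rule inj_on_subset)
  then have "inj_on (VV vs L \<circ> \<tau>) {..<M}" using ti comp_inj_on by blast
  then have d: "distinct ws" unfolding ws_def by (simp add: distinct_map atLeast0LessThan comp_def)
  have "inj_on (\<lambda>i. c {ws ! i, ws ! ((i+1) mod M)}) {..<M}"
  proof (rule inj_on_cong[THEN iffD1, OF _ hi])
    fix i assume "i \<in> {..<M}"
    then show "c {VV vs L (\<tau> i), VV vs L (\<tau> ((i+1) mod M))} = c {ws ! i, ws ! ((i+1) mod M)}"
      using M3 unfolding ws_def by auto
  qed
  then have "rainbow_cycle c M ws" using d M3 unfolding rainbow_cycle_def ws_def by simp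
  then show ?thesis unfolding has_rainbow_cycle_def by blast
qed

lemma inj_col_comp:
  assumes "\<And>i. i < M \<Longrightarrow> h i = cc c vs L (\<sigma> i)" and "inj_on \<sigma> {..<M}"
    and "\<sigma> ` {..<M} \<subseteq> {b..<b+L}"
  shows "inj_on h {..<M}"
proof -
  have "inj_on (cc c vs L) (\<sigma> ` {..<M})" using col_inj assms(3) by (rule inj_on_subset)
  then have "inj_on (cc c vs L \<circ> \<sigma>) {..<M}" using assms(2) comp_inj_on by blast
  then show ?thesis by (rule inj_on_cong[THEN iffD1, rotated]) (use assms(1) in auto)
qed


lemma chord_short:
  assumes k2: "2 \<le> k" and kL: "k + 2 \<le> L" and nb: "\<not> has_rainbow_cycle c (k+1)"
  shows "c {VV vs L b, VV vs L (b+k)} \<in> cc c vs L ` {b..<b+k}"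
proof (rule ccontr)
  assume nX: "c {VV vs L b, VV vs L (b+k)} \<notin> cc c vs L ` {b..<b+k}"
  define h where "h = (\<lambda>i. c {VV vs L (b + i), VV vs L (b + (i+1) mod (k+1))})"
  have hk: "h k = c {VV vs L b, VV vs L (b+k)}" unfolding h_def by (simp add: insert_commute)
  have hi: "h i = cc c vs L (b + i)" if "i < k" for i
    using that unfolding h_def cc_def by simp
  have "inj_on h {..<k}"
    by (rule inj_col_comp[where b=b]) (use hi kL in \<open>auto simp: inj_on_def\<close>)
  moreover have "h k \<notin> h ` {..<k}"
  proof
    assume "h k \<in> h ` {..<k}"
    then obtain i where "i < k" "h k = h i" by auto
    then show False using nX hk hi[of i] by auto
  qed
  ultimately have "inj_on h (insert k {..<k})" by simp
  moreover have "insert k {..<k} = {..<k+1}" by auto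
  ultimately have "inj_on h {..<k+1}" by simp
  then have "has_rainbow_cycle c (k+1)"
    by (intro subcycle[where \<tau>="\<lambda>i. b + i" and b=b]) (use k2 kL in \<open>auto simp: h_def inj_on_def\<close>)
  then show False using nb by simp
qed

lemma chord_long:
  assumes k2: "2 \<le> k" and kL: "k + 2 \<le> L" and nb: "\<not> has_rainbow_cycle c (L-k+1)"
  shows "c {VV vs L b, VV vs L (b+k)} \<in> cc c vs L ` {b+k..<b+L}"
proof -
  have "c {VV vs L (b+k), VV vs L (b+k+(L-k))} \<in> cc c vs L ` {b+k..<b+k+(L-k)}"
    by (rule chord_short) (use k2 kL nb in auto)
  moreover have "b+k+(L-k) = b + L" using kL by simp
  ultimately show ?thesis using V_per[of b] by (simp add: insert_commute add.commute)
qed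


lemma crossing:
  assumes a1: "1 \<le> a" and aL: "3*a < L" and nb: "\<not> has_rainbow_cycle c (L - 2*a + 2)"
    and X: "c {VV vs L b, VV vs L (b+2*a)} \<in> cc c vs L ` {b..<b+a}"
    and Y: "c {VV vs L (b+a), VV vs L (b+3*a)} \<in> cc c vs L ` {b+2*a..<b+3*a}"
  shows False
proof -
  define M where "M = L - 2*a + 2"
  obtain s1 where s1: "s1 \<in> {b..<b+a}" "c {VV vs L b, VV vs L (b+2*a)} = cc c vs L s1" using X by auto
  obtain s2 where s2: "s2 \<in> {b+2*a..<b+3*a}" "c {VV vs L (b+a), VV vs L (b+3*a)} = cc c vs L s2" using Y by auto
  define \<tau> where "\<tau> i = (if i = 0 then b else if i \<le> a+1 then b+2*a+1-i else b+i+2*a-2)" for i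
  define \<sigma> where "\<sigma> i = (if i = 0 then s1 else if i \<le> a then b+2*a-i else if i = a+1 then s2 else b+i+2*a-2)" for i
  have M3: "3 \<le> M" using aL a1 M_def by simp
  have ti: "inj_on \<tau> {..<M}" unfolding inj_on_def \<tau>_def using M_def aL a1 by auto
  have tw: "\<tau> ` {..<M} \<subseteq> {b..<b+L}" unfolding \<tau>_def using M_def aL a1 by auto
  have si: "inj_on \<sigma> {..<M}" unfolding inj_on_def \<sigma>_def using M_def aL a1 s1 s2 by auto
  have sw: "\<sigma> ` {..<M} \<subseteq> {b..<b+L}" unfolding \<sigma>_def using M_def aL a1 s1 s2 by auto
  have hs: "c {VV vs L (\<tau> i), VV vs L (\<tau> ((i+1) mod M))} = cc c vs L (\<sigma> i)" if iM: "i < M" for i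
  proof -
    consider "i = 0" | "1 \<le> i" "i \<le> a" | "i = a+1" | "a+2 \<le> i" "i+1 < M" | "i + 1 = M"
      using iM by linarith
    then show ?thesis
    proof cases
      case 1
      then show ?thesis using M3 s1 by (simp add: \<tau>_def \<sigma>_def)
    next
      case 2
      then have "(i+1) mod M = i+1" using M_def aL by simp
      moreover have "Suc (b+2*a-i) = b+2*a+1-i" using 2 by simp
      ultimately show ?thesis using 2 by (simp add: \<tau>_def \<sigma>_def cc_def insert_commute)
    next
      case 3
      then have "(i+1) mod M = a+2" using M_def aL by simp
      moreover have "b + (a+2) + 2*a - 2 = b + 3*a" by simp
      ultimately show ?thesis using 3 s2 by (simp add: \<tau>_def \<sigma>_def add.commute)
    next
      case 4
      then have "(i+1) mod M = i+1" by simp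
      moreover have "b+(i+1)+2*a-2 = Suc (b+i+2*a-2)" using 4 by simp
      ultimately show ?thesis using 4 by (simp add: \<tau>_def \<sigma>_def cc_def)
    next
      case 5
      then have "(i+1) mod M = 0" by simp
      moreover have "b+i+2*a-2 = b + L - 1" using 5 M_def aL by simp
      moreover have "Suc (b + L - 1) = b + L" using aL by simp
      moreover have "\<not> i \<le> a+1" "i \<noteq> 0" using 5 M_def aL by auto
      ultimately have "\<tau> i = b + L - 1" "\<sigma> i = b + L - 1" "\<tau> ((i+1) mod M) = b"
        by (auto simp: \<tau>_def \<sigma>_def)
      then show ?thesis using \<open>Suc (b + L - 1) = b + L\<close> V_per[of b]
        by (simp add: cc_def insert_commute add.commute)
    qed
  qed
  have "inj_on (\<lambda>i. c {VV vs L (\<tau> i), VV vs L (\<tau> ((i+1) mod M))}) {..<M}"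
    by (rule inj_col_comp[OF hs si sw])
  then have "has_rainbow_cycle c M" by (rule subcycle[OF M3 ti tw])
  then show False using nb M_def by simp
qed


end

lemma double_mod_inj:
  fixes n i j :: nat
  assumes "odd n" "i < n" "j < n" "(2*i) mod n = (2*j) mod n"
  shows "i = j"
proof -
  { fix i j :: nat assume ij: "i \<le> j" "i < n" "j < n" "(2*i) mod n = (2*j) mod n"
    then have "n dvd 2*j - 2*i" using mod_eq_dvd_iff_nat[of "2*i" "2*j" n] by simp
    then have "n dvd 2*(j - i)" by (simp add: right_diff_distrib')
    moreover have "coprime n 2" using assms(1) by (simp add: coprime_commute)
    ultimately have "n dvd j - i" using coprime_dvd_mult_right_iff by (metis mult.commute)
    moreover have "j - i < n" using ij by auto
    ultimately have "j - i = 0" using dvd_imp_le by (metis bot_nat_0.not_eq_extremum linorder_not_le)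
    then have "i = j" using ij by auto }
  then show ?thesis using assms by (metis nat_le_linear)
qed

context
  fixes c :: "'v set \<Rightarrow> 'c" and vs :: "'v list" and L :: nat
  assumes rc: "rainbow_cycle c L vs"
begin

lemma star:
  assumes n5: "5 \<le> n" and on: "odd n" and na: "n = 2*a+1" and Lna: "L = n*a"
    and nbn: "\<not> has_rainbow_cycle c n" and nb2: "\<not> has_rainbow_cycle c (L - 2*a + 2)"
  shows False
proof -
  define X where "X j = c {VV vs L (j*a), VV vs L ((j+2)*a)}" for j
  define col where "col = cc c vs L"
  define Left where "Left j \<longleftrightarrow> X j \<in> col ` {j*a..<j*a+a}" for j
  define Right where "Right j \<longleftrightarrow> X j \<in> col ` {j*a+a..<j*a+2*a}" for j
  have a2: "2 \<le> a" using n5 na by simp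
  have inL: "X j \<in> col ` {j*a..<j*a+2*a}" for j
  proof -
    have "c {VV vs L (j*a), VV vs L (j*a+2*a)} \<in> cc c vs L ` {j*a..<j*a+2*a}"
    proof (rule chord_short[OF rc])
      have "5*a \<le> n*a" using n5 by simp
      then show "2*a + 2 \<le> L" using a2 Lna by linarith
    qed (use a2 na nbn in auto)
    moreover have "(j+2)*a = j*a+2*a" by (simp add: algebra_simps)
    ultimately show ?thesis unfolding X_def col_def by metis
  qed
  have LR: "Left j \<or> Right j" for j
  proof -
    have "{j*a..<j*a+2*a} = {j*a..<j*a+a} \<union> {j*a+a..<j*a+2*a}" by auto
    then show ?thesis using inL[of j] unfolding Left_def Right_def by (metis Un_iff image_Un)
  qed
  have notboth: "\<not> (Left j \<and> Right j)" for j
  proof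
    assume "Left j \<and> Right j"
    then obtain s s' where "s \<in> {j*a..<j*a+a}" "s' \<in> {j*a+a..<j*a+2*a}" "col s = col s'"
      unfolding Left_def Right_def by force
    moreover have "inj_on col {j*a..<j*a+L}" unfolding col_def by (rule col_inj[OF rc])
    moreover have "2*a \<le> L" using Lna n5 by simp
    ultimately show False unfolding inj_on_def by force
  qed
  have cross: "Left j \<Longrightarrow> \<not> Right (j+1)" for j
  proof
    assume l: "Left j" and r: "Right (j+1)"
    have eqs: "(j+2)*a = j*a+2*a" "(j+1)*a = j*a + a" "(j+1+2)*a = j*a+3*a"
      "j*a + a + a = j*a+2*a" "j*a + a +2*a = j*a+3*a" by (simp_all add: algebra_simps)
    show False
    proof (rule crossing[OF rc, where a=a and b="j*a"])
      show "1 \<le> a" using a2 by simp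
      show "3*a < L" using Lna n5 a2 by simp
      show "\<not> has_rainbow_cycle c (L - 2*a + 2)" by (rule nb2)
      show "c {VV vs L (j*a), VV vs L (j*a+2*a)} \<in> cc c vs L ` {j*a..<j*a+a}"
        using l unfolding Left_def X_def col_def by (simp only: eqs)
      show "c {VV vs L (j*a+a), VV vs L (j*a+3*a)} \<in> cc c vs L ` {j*a+2*a..<j*a+3*a}"
        using r unfolding Right_def X_def col_def by (simp only: eqs)
    qed
  qed
  have propag: "Left j \<Longrightarrow> Left (j + t)" for j t
  proof (induction t)
    case (Suc t)
    then have "Left (j + t)" by blast
    then have "\<not> Right (j + t + 1)" by (rule cross)
    then show ?case using LR[of "j+t+1"] by simp
  qed simp
  have per: "Left (j+n) \<Longrightarrow> Left j" for j
  proof -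
    assume "Left (j+n)"
    moreover have "X (j+n) = X j" unfolding X_def using V_per[OF rc, of "j*a"] V_per[OF rc, of "(j+2)*a"]
      by (simp add: Lna algebra_simps)
    moreover have "{(j+n)*a..<(j+n)*a+a} = {j*a+L..<(j*a+a)+L}" by (simp add: Lna algebra_simps)
    ultimately show "Left j" unfolding Left_def col_def using col_img_shift[OF rc] by simp
  qed
  have "\<not> inj_on X {..<n}"
  proof
    assume injX: "inj_on X {..<n}"
    define \<tau> where "\<tau> i = ((2*i) mod n) * a" for i
    have n0: "0 < n" using n5 by simp
    have M3: "3 \<le> n" using n5 by simp
    have ti: "inj_on \<tau> {..<n}"
    proof (rule inj_onI)
      fix i j assume ij: "i \<in> {..<n}" "j \<in> {..<n}" "\<tau> i = \<tau> j"
      then have "(2*i) mod n * a = (2*j) mod n * a" unfolding \<tau>_def by simp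
      then have "(2*i) mod n = (2*j) mod n" using a2 by simp
      moreover have "i < n" "j < n" using ij by auto
      ultimately show "i = j" using double_mod_inj[OF on, of i j] by blast
    qed
    have tw: "\<tau> ` {..<n} \<subseteq> {0..<0+L}"
    proof
      fix x assume "x \<in> \<tau> ` {..<n}"
      then obtain i where "x = ((2*i) mod n) * a" unfolding \<tau>_def by auto
      moreover have "(2*i) mod n < n" using n0 by simp
      ultimately show "x \<in> {0..<0+L}" using Lna a2 by simp
    qed
    have hx: "c {VV vs L (\<tau> i), VV vs L (\<tau> ((i+1) mod n))} = X ((2*i) mod n)" for i
    proof -
      have "\<tau> ((i+1) mod n) mod L = (((2*i) mod n + 2) * a) mod L"
      proof -
        have "\<tau> ((i+1) mod n) mod L = ((2*((i+1) mod n)) mod n mod n) * a"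
          unfolding \<tau>_def Lna by (simp only: mod_mult_mult2)
        also have "(2*((i+1) mod n)) mod n mod n = (2*i+2) mod n"
          by (simp add: mod_mult_right_eq)
        also have "(2*i+2) mod n = ((2*i) mod n + 2) mod n" by (simp only: mod_add_left_eq)
        also have "(((2*i) mod n + 2) mod n) * a = (((2*i) mod n + 2) * a) mod L"
          unfolding Lna by (simp only: mod_mult_mult2)
        finally show ?thesis .
      qed
      then have "VV vs L (\<tau> ((i+1) mod n)) = VV vs L (((2*i) mod n + 2) * a)"
        by (rule V_mod[OF rc])
      then show ?thesis unfolding X_def \<tau>_def by simp
    qed
    have "inj_on (\<lambda>i. (2*i) mod n) {..<n}"
      by (rule inj_onI) (rule double_mod_inj[OF on], auto)
    moreover have "inj_on X ((\<lambda>i. (2*i) mod n) ` {..<n})"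
      by (rule inj_on_subset[OF injX]) (use n0 in auto)
    ultimately have "inj_on (X \<circ> (\<lambda>i. (2*i) mod n)) {..<n}" by (rule comp_inj_on)
    then have "inj_on (\<lambda>i. c {VV vs L (\<tau> i), VV vs L (\<tau> ((i+1) mod n))}) {..<n}"
      using hx by (simp add: comp_def)
    then have "has_rainbow_cycle c n" by (rule subcycle[OF rc M3 ti tw])
    then show False using nbn by simp
  qed
  then obtain j j' where jj: "j < n" "j' < n" "j \<noteq> j'" "X j = X j'" unfolding inj_on_def by auto
  have key: "\<exists>j0. Right j0 \<and> Left (j0+1)" if jj: "j < j'" "j' < n" "X j = X j'" for j j'
  proof -
    obtain s where s: "s \<in> {j*a..<j*a+2*a}" "X j = col s" using inL[of j] by blast
    obtain s' where s': "s' \<in> {j'*a..<j'*a+2*a}" "X j' = col s'" using inL[of j'] by blast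
    have "cc c vs L s = cc c vs L s'" using s(2) s'(2) jj(3) unfolding col_def by simp
    then have smod: "s mod L = s' mod L" by (rule col_eq[OF rc])
    have jn: "j + 2 \<le> n" using jj by simp
    have sL: "s < L"
    proof -
      have "s < (j+2)*a" using s by (simp add: algebra_simps)
      also have "\<dots> \<le> n * a" using jn by (rule mult_le_mono1)
      finally show ?thesis using Lna by simp
    qed
    have s'L: "s' < L + a"
    proof -
      have "s' < (j'+2)*a" using s' by (simp add: algebra_simps)
      also have "\<dots> \<le> (n+1) * a" using jj by (intro mult_le_mono1) simp
      also have "\<dots> = L + a" using Lna by (simp add: algebra_simps)
      finally show ?thesis .
    qed
    show ?thesis
    proof (cases "s' < L")
      case True
      then have ss: "s = s'" using smod sL by simp
      have "j' * a \<le> s'" using s' by simp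
      moreover have "s < j*a + 2*a" using s by simp
      moreover have "j*a + 2*a = (j+2)*a" by (simp add: algebra_simps)
      ultimately have "j' * a < (j+2) * a" using ss by linarith
      then have "j' < j + 2" by (simp only: mult_less_cancel2)
      then have j'j: "j' = j + 1" using jj by simp
      have e1: "(j+1)*a = j*a + a" by (simp add: algebra_simps)
      have "s \<in> {j*a+a..<j*a+2*a}" using s s' ss j'j e1 by simp
      then have "Right j" unfolding Right_def using s(2) by (rule rev_image_eqI)
      moreover have "s' \<in> {(j+1)*a..<(j+1)*a+a}" using s s' ss j'j e1 by simp
      then have "Left (j+1)" unfolding Left_def using s'(2) jj(3) j'j by (intro rev_image_eqI) simp_all
      ultimately show ?thesis by blast
    next
      case False
      have aL: "a \<le> L" using Lna n5 by simp
      have "s' mod L = (s' - L) mod L" using False by (simp add: le_mod_geq)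
      also have "\<dots> = s' - L"
      proof -
        have "s' - L < L" using s'L aL False by linarith
        then show ?thesis by simp
      qed
      finally have ss: "s = s' - L" using smod sL by simp
      then have "s < a" using s'L False by simp
      moreover have "j * a \<le> s" using s by simp
      ultimately have "j * a < 1 * a" by linarith
      then have "j < 1" by (simp only: mult_less_cancel2)
      then have j0: "j = 0" by simp
      have e2: "(n-2)*a + 2*a = L" using Lna n5 by (simp add: algebra_simps)
      have "s' < j'*a + 2*a" using s' by simp
      then have "(n-2) * a < j' * a" using e2 False by linarith
      then have "n - 2 < j'" by (simp only: mult_less_cancel2)
      then have j'n: "j' = n - 1" using jj by simp
      have e3: "(n-1)*a + a = L" using Lna n5 by (simp add: algebra_simps)
      have "s' \<in> {(n-1)*a+a..<(n-1)*a+2*a}" using e3 False s'L by simp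
      then have "Right (n-1)" unfolding Right_def using s'(2) j'n by (intro rev_image_eqI) simp_all
      moreover have "Left (n-1+1)"
      proof -
        have Xn: "X n = X 0"
        proof -
          have eq1: "n*a = 0 + L" using Lna by simp
          have eq2: "(n+2)*a = 2*a + L" using Lna by (simp add: algebra_simps)
          have "VV vs L (n*a) = VV vs L 0" by (simp only: eq1 V_per[OF rc])
          moreover have "VV vs L ((n+2)*a) = VV vs L (2*a)" by (simp only: eq2 V_per[OF rc])
          moreover have "X n = c {VV vs L (n*a), VV vs L ((n+2)*a)}" by (simp only: X_def)
          moreover have "X 0 = c {VV vs L 0, VV vs L (2*a)}" unfolding X_def by (simp add: mult_2)
          ultimately show ?thesis by simp
        qed
        have "X n = col s'" using Xn j0 jj(3) s'(2) by simp
        moreover have "s' \<in> {n*a..<n*a+a}" using False s'L Lna by simp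
        ultimately have "Left n" unfolding Left_def by (intro rev_image_eqI) simp_all
        moreover have "n - 1 + 1 = n" using n5 by simp
        ultimately show ?thesis by simp
      qed
      ultimately show ?thesis by blast
    qed
  qed
  have "\<exists>j0. Right j0 \<and> Left (j0+1)"
  proof (cases "j < j'")
    case True then show ?thesis using key jj by blast
  next
    case False
    then have "j' < j" using jj(3) by simp
    then show ?thesis using key jj by metis
  qed
  then obtain j0 where "Right j0" "Left (j0+1)" by blast
  then have "Left (j0 + 1 + (n-1))" using propag by blast
  moreover have "j0 + 1 + (n-1) = j0 + n" using n5 by simp
  ultimately have "Left (j0 + n)" by simp
  then have "Left j0" by (rule per)
  then show False using notboth \<open>Right j0\<close> by blast
qed

end


lemma additive:
  fixes c :: "'v set \<Rightarrow> 'c"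
  assumes a3: "3 \<le> a" and b3: "3 \<le> b" and na: "\<not> has_rainbow_cycle c a"
    and nb: "\<not> has_rainbow_cycle c b"
  shows "\<not> has_rainbow_cycle c (a + b - 2)"
proof
  assume "has_rainbow_cycle c (a + b - 2)"
  then obtain vs where rc: "rainbow_cycle c (a+b-2) vs" unfolding has_rainbow_cycle_def by blast
  define L where "L = a + b - 2"
  have rc': "rainbow_cycle c L vs" using rc L_def by simp
  have 1: "c {VV vs L 0, VV vs L (0+(a-1))} \<in> cc c vs L ` {0..<0+(a-1)}"
    by (rule chord_short[OF rc']) (use a3 b3 na L_def in auto)
  have 2: "c {VV vs L 0, VV vs L (0+(a-1))} \<in> cc c vs L ` {0+(a-1)..<0+L}"
    by (rule chord_long[OF rc']) (use a3 b3 nb L_def in \<open>auto simp: Suc_diff_le\<close>)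
  from 1 2 obtain s s' where "s < a - 1" "a - 1 \<le> s'" "s' < L" "cc c vs L s = cc c vs L s'"
    by force
  moreover have "inj_on (cc c vs L) {0..<0+L}" by (rule col_inj[OF rc'])
  ultimately show False unfolding inj_on_def L_def by force
qed



lemma star_global:
  fixes c :: "'v set \<Rightarrow> 'c"
  assumes "5 \<le> n" "odd n" "n = 2*a+1" "\<not> has_rainbow_cycle c n"
    "\<not> has_rainbow_cycle c (n*a - 2*a + 2)"
  shows "\<not> has_rainbow_cycle c (n*a)"
proof
  assume "has_rainbow_cycle c (n*a)"
  then obtain vs where rc: "rainbow_cycle c (n*a) vs" unfolding has_rainbow_cycle_def by blast
  show False by (rule star[OF rc, of n a]) (use assms in auto)
qed

theorem theorem8:
  fixes c :: "'v set \<Rightarrow> 'c" and n m :: nat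
  assumes "odd n" and "n \<ge> 3"
    and "\<not> has_rainbow_cycle c n"
    and "2 * m \<ge> n ^ 3"
  shows "\<not> has_rainbow_cycle c m"
proof -
  obtain k0 where k0: "n = 2*k0+1" using assms(1) oddE by blast
  define p where "p = k0 - 1"
  have n: "n = 2*p+3" using k0 assms(2) p_def by simp
  define d where "d = 2*p+1"
  have n3: "3 \<le> n" by (rule assms(2))
  have bad_lin: "\<not> has_rainbow_cycle c (n + k*d)" for k
  proof (induction k)
    case 0 then show ?case using assms(3) by simp
  next
    case (Suc k)
    have "3 \<le> n + k*d" using n3 by linarith
    then have "\<not> has_rainbow_cycle c (n + k*d + n - 2)"
      using additive[of "n+k*d" n c] Suc.IH n3 assms(3) by blast
    moreover have "n + k*d + n - 2 = n + Suc k * d" using n d_def by simp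
    ultimately show ?case by simp
  qed
  have m3: "(2*p+3)^3 \<le> 2*m" using assms(4) n by simp
  show ?thesis
  proof (cases "p = 0")
    case True
    then have "27 \<le> 2*m" using m3 by simp
    then have "m = n + (m - 3) * d" using True n d_def by simp
    then show ?thesis using bad_lin by metis
  next
    case False
    define a where "a = p + 1"
    define N where "N = n * a"
    have Nd: "N = d*(p+2) + 1" unfolding N_def n a_def d_def by (simp add: algebra_simps)
    have e1: "n*a - 2*a + 2 = n + p*d" unfolding n a_def d_def by (simp add: algebra_simps)
    have n5: "5 \<le> n" using False n by simp
    have na: "n = 2*a+1" using n a_def by simp
    have "\<not> has_rainbow_cycle c (n*a - 2*a + 2)" unfolding e1 by (rule bad_lin)
    then have badN0: "\<not> has_rainbow_cycle c N" unfolding N_def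
      using star_global[OF n5 assms(1) na assms(3)] by blast
    have N3: "3 \<le> N" using Nd d_def by simp
    have badN: "\<not> has_rainbow_cycle c (N + k*d)" for k
    proof (induction k)
      case 0 then show ?case using badN0 by simp
    next
      case (Suc k)
      have "3 \<le> N + k*d" using N3 by linarith
      then have "\<not> has_rainbow_cycle c (N + k*d + n - 2)"
        using additive[of "N+k*d" n c] Suc.IH n3 assms(3) by blast
      moreover have "N + k*d + n - 2 = N + Suc k * d" using n d_def by simp
      ultimately show ?case by simp
    qed
    define e where "e = N - 2"
    have badT: "\<not> has_rainbow_cycle c (t*e + N + k*d)" for t k
    proof (induction t)
      case 0 then show ?case using badN by simp
    next
      case (Suc t)
      have "3 \<le> t*e + N + k*d" using N3 by linarith
      then have "\<not> has_rainbow_cycle c (t*e + N + k*d + N - 2)"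
        using additive[of "t*e + N + k*d" N c] Suc.IH N3 badN0 by blast
      moreover have "t*e + N + k*d + N - 2 = Suc t * e + N + k*d" using N3 e_def by simp
      ultimately show ?case by simp
    qed
    have e1: "e + 1 = d*(p+2)" using Nd e_def d_def by simp
    define q where "q = (m-2) div d"
    define r where "r = (m-2) mod d"
    have d0: "0 < d" using d_def by simp
    have rd: "r < d" using d0 r_def by simp
    define t where "t = d - r - 1"
    have F4: "d = r + t + 1" using rd t_def by simp
    have mbig: "d*d*(p+2) + 1 \<le> m"
    proof -
      have "2*(d*d*(p+2) + 1) \<le> (2*p+3)^3"
        unfolding d_def by (simp add: power3_eq_cube algebra_simps)
      then have "2*(d*d*(p+2) + 1) \<le> 2*m" using m3 by (rule order_trans)
      then show ?thesis by simp
    qed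
    have F3: "m - 2 = q*d + r" unfolding q_def r_def by simp
    have "3^3 \<le> (2*p+3)^3" by (rule power_mono) simp_all
    then have m2: "2 \<le> m" using m3 by simp
    have qbig: "d*(p+2) \<le> q + 1"
    proof (rule ccontr)
      assume "\<not> ?thesis"
      then have "q + 2 \<le> d*(p+2)" by simp
      then have "(q+2)*d \<le> d*(p+2)*d" by (rule mult_right_mono) simp
      moreover have "m - 2 < (q+1)*d" using F3 rd by simp
      moreover have "d*(p+2)*d = d*d*(p+2)" by (simp only: ac_simps)
      moreover have "(q+2)*d = (q+1)*d + d" by (simp add: algebra_simps)
      ultimately show False using mbig m2 d0 by linarith
    qed
    have "(t+1)*(p+2) \<le> d*(p+2)" using F4 by (intro mult_le_mono1) simp
    then have "(t+1)*(p+2) \<le> q + 1" using qbig by linarith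
    then obtain k where F1: "q + 1 = k + (t+1)*(p+2)"
      by (metis add.commute le_add_diff_inverse)
    have G1: "d*(q+1) = d*k + d*((t+1)*(p+2))" using F1 by (simp add: algebra_simps)
    have G2: "d*((t+1)*(p+2)) = (t+1)*(e+1)" using e1 by (simp add: algebra_simps)
    have "m = t*e + N + k*d"
    proof -
      have "d*(q+1) = q*d + d" by (simp add: algebra_simps)
      moreover have "(t+1)*(e+1) = t*e + e + t + 1" by (simp add: algebra_simps)
      moreover have "N = e + 2" using e_def N3 by simp
      moreover have "d*k = k*d" by simp
      ultimately show ?thesis using G1 G2 F3 F4 m2 by linarith
    qed
    then show ?thesis using badT by metis
  qed
qed

end
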